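(* For $0\le n\le m$ with $n\equiv m\pmod 2$, $$w_{m,n}(q)=\begin{cases}\dfrac{[n]!\,T_{f,n}(q^2)}{(1-q^{-2})^f}&\text{if } m=n+2f \text{ for some } f\in\mathbb N,\\ 0&\text{otherwise}.\end{cases}$$
   Context: Let $\mathbf U^\imath=\mathbb Q(q)[B]$ be the polynomial algebra in $B$ over $\mathbb Q(q)$, $[n]=(q^n-q^{-n})/(q-q^{-1})$, $[n]!=[1]\cdots[n]$. Define the PBW basis $\Delta_n\in\mathbf U^\imath$ ($n\ge0$) by $\Delta_0=1$ and $B\Delta_n=[n+1]\Delta_{n+1}+\frac{q^{n-1}}{1-q^{-2}}\Delta_{n-1}$ (with $\Delta_{-1}=0$); these form a basis of $\mathbf U^\imath$. Define $w_{m,n}(q)\in\mathbb Q(q)$ by $B^m=\sum_{n=0}^mw_{m,n}(q)\Delta_n$. For $f,n\ge0$, $T_{f,n}(q)\in\mathbb N[q]$ is the crossing generating function of chord diagrams: take $2f+n$ points labelled $1,\dots,2f+n$ clockwise on a circle after a basepoint, choose $n$ of them as endpoints of tethered chords (joined to the basepoint) and a perfect matching of the other $2f$ points into free chords; the crossing number is the number of pairs of free chords $\{a<b\},\{c<d\}$ with $a<c<b<d$ plus the number of pairs (tethered point $p$, free chord $\{a<b\}$) with $a<p<b$; $T_{f,n}(q)=\sum_{D}q^{\mathrm{cr}(D)}$ over all such diagrams $D$. *)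

theory Defs
  imports "HOL-Computational_Algebra.Polynomial" "HOL-Computational_Algebra.Fraction_Field"
begin

type_synonym qfield = "rat poly fract"

definition qq :: qfield where
  "qq = Fract [:0, 1:] 1"

definition qint :: "nat \<Rightarrow> qfield" where
  "qint n = (qq powi (int n) - qq powi (- int n)) / (qq - qq powi (-1))"

definition qfact :: "nat \<Rightarrow> qfield" where
  "qfact n = (\<Prod>i = 1..n. qint i)"

text \<open>U^i = Q(q)[B], B the polynomial variable.\<close>
definition BB :: "qfield poly" where
  "BB = [:0, 1:]"

text \<open>PBW basis: B Delta_k = [k+1] Delta_(k+1) + q^(k-1)/(1-q^-2) Delta_(k-1), Delta_(-1)=0.\<close>
fun Delta :: "nat \<Rightarrow> qfield poly" where
  "Delta 0 = 1"
| "Delta (Suc 0) = smult (1 / qint 1) (BB * Delta 0)"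
| "Delta (Suc (Suc n)) =
     smult (1 / qint (Suc (Suc n)))
       (BB * Delta (Suc n) - smult (qq powi (int n) / (1 - qq powi (-2))) (Delta n))"

definition wcoeff :: "nat \<Rightarrow> nat \<Rightarrow> qfield" where
  "wcoeff m = (THE c. (\<forall>k>m. c k = 0) \<and> BB ^ m = (\<Sum>k\<le>m. smult (c k) (Delta k)))"

text \<open>Chord diagrams with f free chords and n tethered chords on points 1..2f+n:
  a set S of tethered points and a perfect matching M of the remaining points,
  each free chord recorded as a pair (a,b) with a<b.\<close>
definition chord_diagrams :: "nat \<Rightarrow> nat \<Rightarrow> (nat set \<times> (nat \<times> nat) set) set" where
  "chord_diagrams f n = {(S, M).
     S \<subseteq> {1..2*f+n} \<and> card S = n \<and>
     (\<forall>(a,b)\<in>M. a < b \<and> a \<in> {1..2*f+n} - S \<and> b \<in> {1..2*f+n} - S) \<and>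
     (\<forall>p\<in>{1..2*f+n} - S. \<exists>!ch. ch \<in> M \<and> (fst ch = p \<or> snd ch = p))}"

definition crossings :: "nat set \<times> (nat \<times> nat) set \<Rightarrow> nat" where
  "crossings D = (case D of (S, M) \<Rightarrow>
      card {(ch1, ch2). ch1 \<in> M \<and> ch2 \<in> M \<and>
              fst ch1 < fst ch2 \<and> fst ch2 < snd ch1 \<and> snd ch1 < snd ch2}
    + card {(p, ch). p \<in> S \<and> ch \<in> M \<and> fst ch < p \<and> p < snd ch})"

definition Tpoly :: "nat \<Rightarrow> nat \<Rightarrow> nat poly" where
  "Tpoly f n = (\<Sum>D\<in>chord_diagrams f n. monom 1 (crossings D))"

end

theory Submission
  imports Defs
begin


lemma field_aux1: fixes y a :: "'a::field" assumes "y \<noteq> 0" "a \<noteq> 0" "y*y \<noteq> 1"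
  shows "a * ((y * a - inverse (y * a)) / (y - inverse y)) = (y*y*(a*a) - 1) / (y*y - 1)"
proof -
  have e1: "y - inverse y = (y*y - 1) / y" using assms by (simp add: field_simps)
  have e2: "y * a - inverse (y * a) = (y*y*(a*a) - 1) / (y*a)" using assms by (simp add: field_simps)
  have "y*y - 1 \<noteq> 0" using assms by simp
  then show ?thesis unfolding e1 e2 using assms by (simp add: field_simps)
qed

lemma qq_monom: "qq = Fract (monom 1 1) 1"
  by (simp add: qq_def monom_Suc monom_0)

lemma qq_pow: "qq ^ k = Fract (monom 1 k) 1"
proof (induction k)
  case 0 have "[:1:] = (1::rat poly)" by simp
  then show ?case by (metis monom_0 fract_collapse(2) power_0)
next
  case (Suc k) then show ?case
    by (simp add: qq_monom mult_fract mult_monom)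
qed

lemma qq_pow_ne1: "k > 0 \<Longrightarrow> qq ^ k \<noteq> 1"
proof
  assume "k > 0" "qq ^ k = 1"
  then have "Fract (monom 1 k) 1 = Fract (1::rat poly) 1" by (simp add: qq_pow fract_collapse)
  then have "monom (1::rat) k = 1" by (simp add: eq_fract)
  then have "coeff (monom (1::rat) k) 0 = coeff 1 0" by simp
  with \<open>k > 0\<close> show False by simp
qed

lemma qq_nz: "qq \<noteq> 0"
proof
  assume "qq = 0"
  then have "Fract (monom 1 1) 1 = Fract (0::rat poly) 1" by (simp add: qq_monom fract_collapse)
  then have "monom (1::rat) 1 = 0" by (simp add: eq_fract)
  then show False by simp
qed

lemma qint_alt: "qint n = (qq ^ n - inverse (qq ^ n)) / (qq - inverse qq)"
  by (simp add: qint_def power_int_minus)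

lemma qq2_ne1: "qq * qq \<noteq> 1" using qq_pow_ne1[of 2] by (simp add: power2_eq_square)

lemma qq_ne_inv: "qq - inverse qq \<noteq> 0"
proof
  assume "qq - inverse qq = 0"
  then have "qq * qq = 1" using qq_nz by (simp add: field_simps)
  with qq2_ne1 show False by simp
qed

lemma qint_nz: "n > 0 \<Longrightarrow> qint n \<noteq> 0"
proof -
  assume n: "n > 0"
  have h1: "qq ^ (2*n) \<noteq> 1" using qq_pow_ne1 n by simp
  have "qq ^ n - inverse (qq ^ n) \<noteq> 0"
  proof
    assume "qq ^ n - inverse (qq ^ n) = 0"
    then have "qq ^ n * qq ^ n = 1" using qq_nz by (simp add: field_simps)
    with h1 show False by (simp add: power_add[symmetric] mult_2)
  qed
  then show ?thesis using qq_ne_inv by (simp add: qint_alt)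
qed

definition DD :: qfield where "DD = 1 - qq powi (-2)"

lemma DD_nz: "DD \<noteq> 0"
proof
  assume "DD = 0"
  then have "qq * qq = 1" using qq_nz by (simp add: DD_def power_int_minus field_simps power2_eq_square)
  with qq2_ne1 show False by simp
qed

lemma qint_geom: "qq ^ n * qint (Suc n) = (\<Sum>i<Suc n. (qq^2) ^ i)"
proof -
  have "qq^2 \<noteq> 1" using qq2_ne1 by (simp add: power2_eq_square)
  then have g: "(\<Sum>i<Suc n. (qq^2) ^ i) = ((qq^2)^Suc n - 1) / (qq^2 - 1)"
    using geometric_sum[of "qq^2" "Suc n"] by simp
  have a: "qq ^ n \<noteq> 0" using qq_nz by simp
  have "qq ^ n * qint (Suc n) = qq ^ n * ((qq * qq ^ n - inverse (qq * qq ^ n)) / (qq - inverse qq))"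
    by (simp add: qint_alt)
  also have "\<dots> = (qq*qq*(qq^n*qq^n) - 1) / (qq*qq - 1)"
    by (rule field_aux1[OF qq_nz a qq2_ne1])
  also have "\<dots> = ((qq^2)^Suc n - 1) / (qq^2 - 1)"
    by (simp add: power2_eq_square power_mult_distrib)
  finally show ?thesis using g by simp
qed

lemma qfact_Suc: "qfact (Suc n) = qfact n * qint (Suc n)"
  by (simp add: qfact_def prod.nat_ivl_Suc' mult.commute)

lemma qint1: "qint 1 = 1"
  using qq_nz qq_ne_inv by (simp add: qint_alt)




lemma qint_Suc0: "qint (Suc 0) = 1" using qint1 by simp

lemma BB_mult: "BB * p = pCons 0 p"
  by (simp add: BB_def)

lemma Delta_deg: "degree (Delta k) \<le> k \<and> coeff (Delta k) k \<noteq> 0"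
proof (induction k rule: Delta.induct)
  case 1 then show ?case by simp
next
  case 2 then show ?case by (simp add: BB_def qint_Suc0)
next
  case (3 n)
  let ?c = "qq powi (int n) / (1 - qq powi (-2))"
  have d1: "degree (BB * Delta (Suc n)) \<le> Suc (Suc n)"
    using 3 by (simp add: BB_mult degree_pCons_le)
  have d2: "degree (smult ?c (Delta n)) \<le> Suc (Suc n)"
    using 3 by (meson degree_smult_le le_SucI order_trans)
  have "degree (BB * Delta (Suc n) - smult ?c (Delta n)) \<le> Suc (Suc n)"
    using d1 d2 degree_diff_le by blast
  then have deg: "degree (Delta (Suc (Suc n))) \<le> Suc (Suc n)"
    by (simp del: Delta.simps(3) add: Delta.simps(3)[of n])
  have c0: "coeff (Delta n) (Suc (Suc n)) = 0" using 3 by (simp add: coeff_eq_0)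
  have "coeff (Delta (Suc (Suc n))) (Suc (Suc n)) = (1 / qint (Suc (Suc n))) * coeff (Delta (Suc n)) (Suc n)"
    using c0 by (simp add: BB_mult)
  then have "coeff (Delta (Suc (Suc n))) (Suc (Suc n)) \<noteq> 0"
    using 3 qint_nz[of "Suc (Suc n)"] by simp
  with deg show ?case by simp
qed

definition cc :: "nat \<Rightarrow> qfield" where "cc k = qq powi (int k) / DD"

lemma Delta_rec: "BB * Delta k = smult (qint (Suc k)) (Delta (Suc k)) +
   (case k of 0 \<Rightarrow> 0 | Suc j \<Rightarrow> smult (cc j) (Delta j))"
proof (cases k)
  case 0 then show ?thesis by (simp add: qint_Suc0)
next
  case (Suc j)
  have "smult (qint (Suc (Suc j))) (Delta (Suc (Suc j))) = BB * Delta (Suc j) - smult (cc j) (Delta j)"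
    using qint_nz[of "Suc (Suc j)"] by (simp add: cc_def DD_def)
  then show ?thesis using Suc by simp
qed

fun wrec :: "nat \<Rightarrow> nat \<Rightarrow> qfield" where
  "wrec 0 n = (if n = 0 then 1 else 0)"
| "wrec (Suc m) n = (case n of 0 \<Rightarrow> 0 | Suc j \<Rightarrow> qint n * wrec m j) + cc n * wrec m (Suc n)"

lemma wrec_zero: "m < k \<Longrightarrow> wrec m k = 0"
  by (induction m arbitrary: k) (auto split: nat.split)

lemma wrec_expand: "BB ^ m = (\<Sum>k\<le>m. smult (wrec m k) (Delta k))"
proof (induction m)
  case 0 then show ?case by simp
next
  case (Suc m)
  let ?w = "wrec m"
  define G where "G k = smult (?w k) (case k of 0 \<Rightarrow> 0 | Suc j \<Rightarrow> smult (cc j) (Delta j))" for k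
  have "BB ^ Suc m = (\<Sum>k\<le>m. smult (?w k) (BB * Delta k))"
    using Suc by (simp add: sum_distrib_left mult_smult_right)
  also have "\<dots> = (\<Sum>k\<le>m. smult (?w k * qint (Suc k)) (Delta (Suc k))) + (\<Sum>k\<le>m. G k)"
    unfolding Delta_rec G_def by (simp add: smult_add_right sum.distrib)
  also have "(\<Sum>k\<le>m. smult (?w k * qint (Suc k)) (Delta (Suc k)))
      = (\<Sum>k\<le>Suc m. smult (case k of 0 \<Rightarrow> 0 | Suc j \<Rightarrow> qint k * ?w j) (Delta k))"
    by (subst sum.atMost_Suc_shift) (simp add: mult.commute)
  also have "(\<Sum>k\<le>m. G k) = (\<Sum>k\<le>Suc m. G k)"
    by (simp add: G_def wrec_zero)
  also have "\<dots> = (\<Sum>k\<le>m. smult (cc k * ?w (Suc k)) (Delta k))"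
    by (subst sum.atMost_Suc_shift) (simp add: G_def mult.commute)
  also have "\<dots> = (\<Sum>k\<le>Suc m. smult (cc k * ?w (Suc k)) (Delta k))"
    by (simp add: wrec_zero)
  finally show ?case
    by (simp add: sum.distrib[symmetric] smult_add_left)
qed

lemma lin_indep: "(\<Sum>k\<le>m. smult (e k) (Delta k)) = 0 \<Longrightarrow> k \<le> m \<Longrightarrow> e k = 0"
proof (induction m arbitrary: k)
  case 0 then show ?case using Delta_deg[of 0] by simp
next
  case (Suc m)
  have X: "coeff (\<Sum>k\<le>Suc m. smult (e k) (Delta k)) (Suc m) = (\<Sum>k\<le>Suc m. e k * coeff (Delta k) (Suc m))"
    by (simp add: coeff_sum)
  also have "\<dots> = e (Suc m) * coeff (Delta (Suc m)) (Suc m)"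
  proof -
    have "\<forall>k\<le>m. coeff (Delta k) (Suc m) = 0"
      using Delta_deg by (metis coeff_eq_0 le_imp_less_Suc order_le_less_trans)
    then show ?thesis by simp
  qed
  finally have X: "coeff (\<Sum>k\<le>Suc m. smult (e k) (Delta k)) (Suc m) = e (Suc m) * coeff (Delta (Suc m)) (Suc m)" .
  have "e (Suc m) * coeff (Delta (Suc m)) (Suc m) = 0" by (metis X Suc.prems(1) coeff_0)
  then have "e (Suc m) = 0" using Delta_deg[of "Suc m"] by simp
  then have "(\<Sum>k\<le>m. smult (e k) (Delta k)) = 0" using Suc.prems(1) by simp
  then show ?case using Suc by (cases "k = Suc m") (auto simp: \<open>e (Suc m) = 0\<close>)
qed

lemma wcoeff_wrec: "wcoeff m = wrec m"
  unfolding wcoeff_def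
proof (rule the_equality)
  show "(\<forall>k>m. wrec m k = 0) \<and> BB ^ m = (\<Sum>k\<le>m. smult (wrec m k) (Delta k))"
    using wrec_zero wrec_expand by blast
next
  fix c assume c: "(\<forall>k>m. c k = 0) \<and> BB ^ m = (\<Sum>k\<le>m. smult (c k) (Delta k))"
  have "(\<Sum>k\<le>m. smult (c k - wrec m k) (Delta k)) = 0"
    using c wrec_expand[of m] by (simp add: smult_diff_left sum_subtractf)
  then have "\<forall>k\<le>m. c k - wrec m k = 0" using lin_indep[of "\<lambda>k. c k - wrec m k" m] by blast
  then show "c = wrec m"
    using c wrec_zero by (metis eq_iff_diff_eq_0 ext not_le)
qed




definition vd :: "nat \<Rightarrow> nat \<Rightarrow> nat set \<Rightarrow> (nat \<times> nat) set \<Rightarrow> bool" where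
  "vd N k S M \<longleftrightarrow> S \<subseteq> {1..N} \<and> card S = k \<and>
     (\<forall>(a,b)\<in>M. a < b \<and> a \<in> {1..N} - S \<and> b \<in> {1..N} - S) \<and>
     (\<forall>p\<in>{1..N} - S. \<exists>!ch. ch \<in> M \<and> (fst ch = p \<or> snd ch = p))"

lemma cd_iff: "(S, M) \<in> chord_diagrams f n \<longleftrightarrow> vd (2*f+n) n S M"
  unfolding chord_diagrams_def vd_def by simp

lemma vd_chords: "vd N k S M \<Longrightarrow> \<forall>(a,b)\<in>M. a < b \<and> a \<in> {1..N} - S \<and> b \<in> {1..N} - S"
  unfolding vd_def by blast

lemma vd_M_sub: "vd N k S M \<Longrightarrow> M \<subseteq> {1..N} \<times> {1..N}"
proof
  fix x assume v: "vd N k S M" and x: "x \<in> M"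
  obtain c d where "x = (c,d)" by (cases x)
  with x bspec[OF vd_chords[OF v] x] show "x \<in> {1..N} \<times> {1..N}" by auto
qed

lemma vd_S_sub: "vd N k S M \<Longrightarrow> S \<subseteq> {1..N}"
  unfolding vd_def by blast

lemma vd_finite: "vd N k S M \<Longrightarrow> finite S \<and> finite M"
proof -
  assume v: "vd N k S M"
  have "finite S" using vd_S_sub[OF v] finite_subset by blast
  moreover have "finite M" using vd_M_sub[OF v] by (rule finite_subset) simp
  ultimately show ?thesis ..
qed

lemma vd_chord: "vd N k S M \<Longrightarrow> (c, d) \<in> M \<Longrightarrow> c < d \<and> 1 \<le> c \<and> d \<le> N \<and> c \<notin> S \<and> d \<notin> S"
proof -
  assume v: "vd N k S M" and cd: "(c, d) \<in> M"
  from bspec[OF vd_chords[OF v] cd] show ?thesis by simp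
qed

lemma vd_S: "vd N k S M \<Longrightarrow> p \<in> S \<Longrightarrow> 1 \<le> p \<and> p \<le> N"
  using vd_S_sub by fastforce

lemma vd_card: "vd N k S M \<Longrightarrow> card S = k"
  unfolding vd_def by blast

lemma vd_match: "vd N k S M \<Longrightarrow> p \<in> {1..N} - S \<Longrightarrow> \<exists>!ch. ch \<in> M \<and> (fst ch = p \<or> snd ch = p)"
  unfolding vd_def by blast

lemma vd_uniq: "vd N k S M \<Longrightarrow> 1 \<le> p \<Longrightarrow> p \<le> N \<Longrightarrow> p \<notin> S \<Longrightarrow> ch1 \<in> M \<Longrightarrow> ch2 \<in> M \<Longrightarrow>
   (fst ch1 = p \<or> snd ch1 = p) \<Longrightarrow> (fst ch2 = p \<or> snd ch2 = p) \<Longrightarrow> ch1 = ch2"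
proof -
  assume v: "vd N k S M" and p: "1 \<le> p" "p \<le> N" "p \<notin> S" and c: "ch1 \<in> M" "ch2 \<in> M"
    "(fst ch1 = p \<or> snd ch1 = p)" "(fst ch2 = p \<or> snd ch2 = p)"
  have "p \<in> {1..N} - S" using p by simp
  from vd_match[OF v this] show "ch1 = ch2" using c by blast
qed

lemma vd_ex: "vd N k S M \<Longrightarrow> 1 \<le> p \<Longrightarrow> p \<le> N \<Longrightarrow> p \<notin> S \<Longrightarrow> \<exists>ch\<in>M. fst ch = p \<or> snd ch = p"
proof -
  assume v: "vd N k S M" and p: "1 \<le> p" "p \<le> N" "p \<notin> S"
  have "p \<in> {1..N} - S" using p by simp
  from vd_match[OF v this] show ?thesis by blast
qed

lemma finite_cd: "finite (chord_diagrams f n)"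
proof -
  let ?N = "2*f+n"
  have "chord_diagrams f n \<subseteq> Pow {1..?N} \<times> Pow ({1..?N} \<times> {1..?N})"
  proof
    fix D assume "D \<in> chord_diagrams f n"
    then obtain S M where D: "D = (S,M)" "vd ?N n S M" by (cases D) (auto simp: cd_iff)
    then show "D \<in> Pow {1..?N} \<times> Pow ({1..?N} \<times> {1..?N})"
      using vd_M_sub[OF D(2)] vd_S_sub[OF D(2)] by simp
  qed
  then show ?thesis by (rule finite_subset) simp
qed

definition FF :: "(nat \<times> nat) set \<Rightarrow> ((nat \<times> nat) \<times> (nat \<times> nat)) set" where
  "FF M = {(ch1, ch2). ch1 \<in> M \<and> ch2 \<in> M \<and>
              fst ch1 < fst ch2 \<and> fst ch2 < snd ch1 \<and> snd ch1 < snd ch2}"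

definition TC :: "nat set \<Rightarrow> (nat \<times> nat) set \<Rightarrow> (nat \<times> (nat \<times> nat)) set" where
  "TC S M = {(p, ch). p \<in> S \<and> ch \<in> M \<and> fst ch < p \<and> p < snd ch}"

lemma cr_eq: "crossings (S, M) = card (FF M) + card (TC S M)"
  unfolding crossings_def FF_def TC_def by simp

lemma finite_FF: "finite M \<Longrightarrow> finite (FF M)"
  by (rule finite_subset[of _ "M \<times> M"]) (auto simp: FF_def)

lemma finite_TC: "finite S \<Longrightarrow> finite M \<Longrightarrow> finite (TC S M)"
  by (rule finite_subset[of _ "S \<times> M"]) (auto simp: TC_def)

lemma rank_sum:
  fixes S :: "nat set"
  assumes "finite S"
  shows "(\<Sum>a\<in>S. h (card {p\<in>S. a<p})) = (\<Sum>i<card S. h i)"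
proof -
  let ?r = "\<lambda>a. card {p\<in>S. a<p}"
  have inj: "inj_on ?r S"
  proof (rule inj_onI)
    fix a b assume ab: "a \<in> S" "b \<in> S" "?r a = ?r b"
    show "a = b"
    proof (rule ccontr)
      assume "a \<noteq> b"
      then consider "a < b" | "b < a" using linorder_neq_iff by blast
      then show False
      proof cases
        case 1
        have "{p\<in>S. b<p} \<subset> {p\<in>S. a<p}" using 1 ab(1,2) by auto
        then have "?r b < ?r a" using assms by (intro psubset_card_mono) auto
        then show False using ab by simp
      next
        case 2
        have "{p\<in>S. a<p} \<subset> {p\<in>S. b<p}" using 2 ab(1,2) by auto
        then have "?r a < ?r b" using assms by (intro psubset_card_mono) auto
        then show False using ab by simp
      qed
    qed
  qed
  have sub: "?r ` S \<subseteq> {..<card S}"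
  proof
    fix i assume "i \<in> ?r ` S"
    then obtain a where a: "a \<in> S" "i = ?r a" by blast
    have "{p\<in>S. a<p} \<subset> S" using a(1) by auto
    then have "?r a < card S" using assms by (intro psubset_card_mono) auto
    then show "i \<in> {..<card S}" using a by simp
  qed
  have "card (?r ` S) = card {..<card S}" using card_image[OF inj] by simp
  then have "?r ` S = {..<card S}" using sub by (intro card_subset_eq) auto
  then have "bij_betw ?r S {..<card S}" using inj by (simp add: bij_betw_def)
  then show ?thesis by (rule sum.reindex_bij_betw)
qed




lemma set_id1: "{1..Suc N'} - insert (Suc N') S = {1..N'} - S"
  by auto

lemma vdA1: "vd N' n S M \<Longrightarrow> vd (Suc N') (Suc n) (insert (Suc N') S) M"
proof -
  assume v: "vd N' n S M"
  have nS: "Suc N' \<notin> S" using vd_S[OF v] by fastforce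
  have c1: "insert (Suc N') S \<subseteq> {1..Suc N'}" using vd_S_sub[OF v] by auto
  have c2: "card (insert (Suc N') S) = Suc n" using nS vd_finite[OF v] vd_card[OF v] by simp
  show ?thesis using c1 c2 vd_chords[OF v] vd_match[OF v] unfolding vd_def set_id1 by blast
qed

lemma set_id2: "Suc N' \<in> S \<Longrightarrow> {1..N'} - (S - {Suc N'}) = {1..Suc N'} - S"
  by (auto simp: le_Suc_eq)

lemma vdA2: "vd (Suc N') (Suc n) S M \<Longrightarrow> Suc N' \<in> S \<Longrightarrow> vd N' n (S - {Suc N'}) M"
proof -
  assume v: "vd (Suc N') (Suc n) S M" and N: "Suc N' \<in> S"
  have c1: "S - {Suc N'} \<subseteq> {1..N'}" using vd_S_sub[OF v] by auto
  have c2: "card (S - {Suc N'}) = n" using N vd_finite[OF v] vd_card[OF v] by simp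
  show ?thesis using c1 c2 vd_chords[OF v] vd_match[OF v] unfolding vd_def set_id2[OF N] by blast
qed

lemma crA: "vd N' k S M \<Longrightarrow> crossings (insert (Suc N') S, M) = crossings (S, M)"
proof -
  assume v: "vd N' k S M"
  have "TC (insert (Suc N') S) M = TC S M"
  proof -
    have "\<forall>ch\<in>M. snd ch \<le> N'" using vd_chord[OF v] by fastforce
    then show ?thesis unfolding TC_def by fastforce
  qed
  then show ?thesis by (simp add: cr_eq)
qed




definition TX :: "'a::comm_semiring_1 \<Rightarrow> nat \<Rightarrow> nat \<Rightarrow> 'a" where
  "TX x f n = (\<Sum>D\<in>chord_diagrams f n. x ^ crossings D)"

lemma cdA: "(S, M) \<in> chord_diagrams f (Suc n) \<longleftrightarrow> vd (Suc (2*f+n)) (Suc n) S M"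
  by (simp add: cd_iff)

lemma LA: "(\<Sum>D\<in>{D\<in>chord_diagrams f (Suc n). Suc (2*f+n) \<in> fst D}. x ^ crossings D) = TX x f n"
proof -
  let ?N' = "2*f+n"
  let ?phi = "\<lambda>D. (insert (Suc ?N') (fst D), snd D)"
  let ?psi = "\<lambda>D. (fst D - {Suc ?N'}, snd D)"
  let ?A = "{D\<in>chord_diagrams f (Suc n). Suc ?N' \<in> fst D}"
  have bij: "bij_betw ?phi (chord_diagrams f n) ?A"
  proof (rule bij_betw_byWitness[where f' = ?psi])
    show "\<forall>D\<in>chord_diagrams f n. ?psi (?phi D) = D"
    proof
      fix D assume "D \<in> chord_diagrams f n"
      then obtain S M where D: "D = (S, M)" "vd ?N' n S M" by (cases D) (auto simp: cd_iff)
      have "Suc ?N' \<notin> S" using vd_S[OF D(2)] by fastforce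
      then show "?psi (?phi D) = D" using D by simp
    qed
    show "\<forall>D\<in>?A. ?phi (?psi D) = D"
    proof
      fix D assume "D \<in> ?A"
      then obtain S M where D: "D = (S, M)" "Suc ?N' \<in> S" by (cases D) auto
      then show "?phi (?psi D) = D" by (simp add: insert_absorb)
    qed
    show "?phi ` chord_diagrams f n \<subseteq> ?A"
    proof
      fix E assume "E \<in> ?phi ` chord_diagrams f n"
      then obtain D where "D \<in> chord_diagrams f n" "E = ?phi D" by blast
      then obtain S M where D: "E = (insert (Suc ?N') S, M)" "vd ?N' n S M" by (cases D) (auto simp: cd_iff)
      then show "E \<in> ?A" using vdA1[OF D(2)] by (simp add: cdA)
    qed
    show "?psi ` ?A \<subseteq> chord_diagrams f n"
    proof
      fix E assume "E \<in> ?psi ` ?A"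
      then obtain D where "D \<in> ?A" "E = ?psi D" by blast
      then obtain S M where D: "E = (S - {Suc ?N'}, M)" "vd (Suc ?N') (Suc n) S M" "Suc ?N' \<in> S"
        by (cases D) (auto simp: cdA)
      then show "E \<in> chord_diagrams f n" using vdA2[OF D(2,3)] by (simp add: cd_iff)
    qed
  qed
  have "(\<Sum>D\<in>?A. x ^ crossings D) = (\<Sum>D\<in>chord_diagrams f n. x ^ crossings (?phi D))"
    using sum.reindex_bij_betw[OF bij, of "\<lambda>D. x ^ crossings D"] by simp
  also have "\<dots> = TX x f n"
    unfolding TX_def
  proof (rule sum.cong[OF refl])
    fix D assume "D \<in> chord_diagrams f n"
    then obtain S M where D: "D = (S, M)" "vd ?N' n S M" by (cases D) (auto simp: cd_iff)
    then show "x ^ crossings (?phi D) = x ^ crossings D" using crA[OF D(2)] by simp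
  qed
  finally show ?thesis .
qed

lemma LA0: "{D\<in>chord_diagrams f 0. 2*f \<in> fst D} = {}"
proof -
  { fix S M assume "(S,M) \<in> chord_diagrams f 0"
    then have "vd (2*f) 0 S M" by (simp add: cd_iff)
    then have "S = {}" using vd_card vd_finite by fastforce }
  then show ?thesis by fastforce
qed

lemma LB0: "{D\<in>chord_diagrams 0 (Suc n). Suc n \<notin> fst D} = {}"
proof -
  { fix S M assume "(S,M) \<in> chord_diagrams 0 (Suc n)" "Suc n \<notin> S"
    then have v: "vd (Suc n) (Suc n) S M" by (simp add: cd_iff)
    have "card S = card {1..Suc n}" using vd_card[OF v] by simp
    then have "S = {1..Suc n}" using vd_S_sub[OF v] by (intro card_subset_eq) auto
    with \<open>Suc n \<notin> S\<close> have False by simp }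
  then show ?thesis by fastforce
qed




lemma vdB4: "vd N' k S M \<Longrightarrow> (a, Suc N') \<notin> M"
proof
  assume v: "vd N' k S M" and "(a, Suc N') \<in> M"
  from vd_chord[OF v \<open>(a, Suc N') \<in> M\<close>] show False by simp
qed

lemma vdB1: "vd N' (Suc n) S M \<Longrightarrow> a \<in> S \<Longrightarrow> vd (Suc N') n (S - {a}) (insert (a, Suc N') M)"
proof -
  assume v: "vd N' (Suc n) S M" and a: "a \<in> S"
  let ?N = "Suc N'"
  have aN: "1 \<le> a" "a \<le> N'" using vd_S[OF v a] by auto
  have NS: "?N \<notin> S" using vd_S[OF v] by fastforce
  have c1: "S - {a} \<subseteq> {1..?N}" using vd_S_sub[OF v] by auto
  have c2: "card (S - {a}) = n" using a vd_finite[OF v] vd_card[OF v] by simp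
  have c3: "\<forall>(c,d)\<in>insert (a, ?N) M. c < d \<and> c \<in> {1..?N} - (S - {a}) \<and> d \<in> {1..?N} - (S - {a})"
  proof
    fix x assume x: "x \<in> insert (a, ?N) M"
    obtain c d where xcd: "x = (c,d)" by (cases x)
    show "case x of (c,d) \<Rightarrow> c < d \<and> c \<in> {1..?N} - (S - {a}) \<and> d \<in> {1..?N} - (S - {a})"
    proof (cases "x = (a, ?N)")
      case True then show ?thesis using aN NS by auto
    next
      case False
      then have "x \<in> M" using x by blast
      then have "(c,d) \<in> M" using xcd by simp
      from vd_chord[OF v this] show ?thesis using xcd by auto
    qed
  qed
  have c4: "\<forall>p\<in>{1..?N} - (S - {a}). \<exists>!ch. ch \<in> insert (a, ?N) M \<and> (fst ch = p \<or> snd ch = p)"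
  proof
    fix p assume p: "p \<in> {1..?N} - (S - {a})"
    show "\<exists>!ch. ch \<in> insert (a, ?N) M \<and> (fst ch = p \<or> snd ch = p)"
    proof (cases "p = a \<or> p = ?N")
      case True
      show ?thesis
      proof (rule ex1I[of _ "(a, ?N)"])
        show "(a, ?N) \<in> insert (a, ?N) M \<and> (fst (a, ?N) = p \<or> snd (a, ?N) = p)" using True by auto
      next
        fix ch assume ch: "ch \<in> insert (a, ?N) M \<and> (fst ch = p \<or> snd ch = p)"
        show "ch = (a, ?N)"
        proof (rule ccontr)
          assume ne: "ch \<noteq> (a, ?N)"
          obtain c d where cd: "ch = (c,d)" by (cases ch)
          have "ch \<in> M" using ch ne by blast
          then have "(c,d) \<in> M" using cd by simp
          have h: "c < d" "d \<le> N'" "c \<notin> S" "d \<notin> S" using vd_chord[OF v \<open>(c,d) \<in> M\<close>] by auto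
          have t: "c = p \<or> d = p" using ch cd by simp
          show False
          proof (cases "p = a")
            case True then show False using t h a by auto
          next
            case False then have "p = ?N" using \<open>p = a \<or> p = ?N\<close> by simp
            then show False using t h by auto
          qed
        qed
      qed
    next
      case False
      then have p': "1 \<le> p" "p \<le> N'" "p \<notin> S" using p by auto
      obtain ch0 where ch0: "ch0 \<in> M" "fst ch0 = p \<or> snd ch0 = p" using vd_ex[OF v p'] by blast
      show ?thesis
      proof (rule ex1I[of _ ch0])
        show "ch0 \<in> insert (a, ?N) M \<and> (fst ch0 = p \<or> snd ch0 = p)" using ch0 by simp
      next
        fix ch assume ch: "ch \<in> insert (a, ?N) M \<and> (fst ch = p \<or> snd ch = p)"
        have "ch \<noteq> (a, ?N)"
        proof
          assume "ch = (a, ?N)"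
          then show False using ch False by simp
        qed
        then have "ch \<in> M" using ch by blast
        then show "ch = ch0" using vd_uniq[OF v p' \<open>ch \<in> M\<close> ch0(1)] ch ch0(2) by blast
      qed
    qed
  qed
  show ?thesis unfolding vd_def by (intro conjI c1 c2 c3 c4)
qed

lemma vdB2: "vd (Suc N') n S M \<Longrightarrow> Suc N' \<notin> S \<Longrightarrow> (a, Suc N') \<in> M \<Longrightarrow>
    vd N' (Suc n) (insert a S) (M - {(a, Suc N')})"
proof -
  assume v: "vd (Suc N') n S M" and NS: "Suc N' \<notin> S" and aM: "(a, Suc N') \<in> M"
  let ?N = "Suc N'"
  have aN: "1 \<le> a" "a \<le> N'" "a \<notin> S" using vd_chord[OF v aM] by auto
  have o1: "1 \<le> ?N" "?N \<le> ?N" "a \<le> ?N" using aN(2) by auto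
  have t1: "fst (a, ?N) = ?N \<or> snd (a, ?N) = ?N" by simp
  have t2: "fst (a, ?N) = a \<or> snd (a, ?N) = a" by simp
  have UN: "ch = (a, ?N)" if "ch \<in> M" "fst ch = ?N \<or> snd ch = ?N" for ch
    by (rule vd_uniq[OF v o1(1,2) NS that(1) aM that(2) t1])
  have Ua: "ch = (a, ?N)" if "ch \<in> M" "fst ch = a \<or> snd ch = a" for ch
    by (rule vd_uniq[OF v aN(1) o1(3) aN(3) that(1) aM that(2) t2])
  have c1: "insert a S \<subseteq> {1..N'}"
  proof
    fix p assume "p \<in> insert a S"
    then consider "p = a" | "p \<in> S" by blast
    then show "p \<in> {1..N'}"
    proof cases
      case 1 then show ?thesis using aN by simp
    next
      case 2
      have "p \<in> {1..?N}" using vd_S_sub[OF v] 2 by blast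
      moreover have "p \<noteq> ?N" using NS 2 by blast
      ultimately show ?thesis by simp
    qed
  qed
  have c2: "card (insert a S) = Suc n" using aN vd_finite[OF v] vd_card[OF v] by simp
  have c3: "\<forall>(c,d)\<in>M - {(a, ?N)}. c < d \<and> c \<in> {1..N'} - insert a S \<and> d \<in> {1..N'} - insert a S"
  proof
    fix x assume x: "x \<in> M - {(a, ?N)}"
    obtain c d where xcd: "x = (c,d)" by (cases x)
    have xM: "x \<in> M" "x \<noteq> (a, ?N)" using x by blast+
    have cd: "(c,d) \<in> M" "(c,d) \<noteq> (a, ?N)" using xM xcd by simp_all
    have h: "c < d" "1 \<le> c" "d \<le> ?N" "c \<notin> S" "d \<notin> S" using vd_chord[OF v cd(1)] by simp_all
    have dN: "d \<noteq> ?N"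
    proof
      assume "d = ?N"
      then have "(c,d) = (a, ?N)" using UN[OF cd(1)] by simp
      with cd(2) show False by contradiction
    qed
    have ca: "c \<noteq> a"
    proof
      assume "c = a"
      then have "(c,d) = (a, ?N)" using Ua[OF cd(1)] by simp
      with cd(2) show False by contradiction
    qed
    have da: "d \<noteq> a"
    proof
      assume "d = a"
      then have "(c,d) = (a, ?N)" using Ua[OF cd(1)] by simp
      with cd(2) show False by contradiction
    qed
    have "d \<le> N'" using h(3) dN by simp
    then have "c < d \<and> c \<in> {1..N'} - insert a S \<and> d \<in> {1..N'} - insert a S"
      using h ca da by simp
    then show "case x of (c,d) \<Rightarrow> c < d \<and> c \<in> {1..N'} - insert a S \<and> d \<in> {1..N'} - insert a S"
      using xcd by simp
  qed
  have c4: "\<forall>p\<in>{1..N'} - insert a S. \<exists>!ch. ch \<in> M - {(a, ?N)} \<and> (fst ch = p \<or> snd ch = p)"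
  proof
    fix p assume p: "p \<in> {1..N'} - insert a S"
    then have p': "1 \<le> p" "p \<le> ?N" "p \<notin> S" "p \<noteq> a" "p \<noteq> ?N" by auto
    obtain ch0 where ch0: "ch0 \<in> M" "fst ch0 = p \<or> snd ch0 = p" using vd_ex[OF v p'(1-3)] by blast
    have "ch0 \<noteq> (a, ?N)"
    proof
      assume "ch0 = (a, ?N)"
      then show False using ch0(2) p'(4,5) by simp
    qed
    show "\<exists>!ch. ch \<in> M - {(a, ?N)} \<and> (fst ch = p \<or> snd ch = p)"
    proof (rule ex1I[of _ ch0])
      show "ch0 \<in> M - {(a, ?N)} \<and> (fst ch0 = p \<or> snd ch0 = p)" using ch0 \<open>ch0 \<noteq> (a, ?N)\<close> by simp
    next
      fix ch assume ch: "ch \<in> M - {(a, ?N)} \<and> (fst ch = p \<or> snd ch = p)"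
      then have chM: "ch \<in> M" "fst ch = p \<or> snd ch = p" by blast+
      show "ch = ch0" by (rule vd_uniq[OF v p'(1-3) chM(1) ch0(1) chM(2) ch0(2)])
    qed
  qed
  show ?thesis unfolding vd_def by (intro conjI c1 c2 c3 c4)
qed

lemma vdB3: "vd (Suc N') n S M \<Longrightarrow> Suc N' \<notin> S \<Longrightarrow> \<exists>!a. (a, Suc N') \<in> M"
proof -
  assume v: "vd (Suc N') n S M" and NS: "Suc N' \<notin> S"
  have o: "1 \<le> Suc N'" "Suc N' \<le> Suc N'" by simp_all
  obtain ch where ch: "ch \<in> M" "fst ch = Suc N' \<or> snd ch = Suc N'" using vd_ex[OF v o NS] by blast
  obtain c d where cd: "ch = (c,d)" by (cases ch)
  have cdM: "(c,d) \<in> M" using ch(1) cd by simp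
  have "c < d" "d \<le> Suc N'" using vd_chord[OF v cdM] by simp_all
  moreover have "c = Suc N' \<or> d = Suc N'" using ch(2) cd by simp
  ultimately have "d = Suc N'" by linarith
  then have ex: "(c, Suc N') \<in> M" using cdM by simp
  show ?thesis
  proof (rule ex1I[of _ c])
    show "(c, Suc N') \<in> M" by (rule ex)
  next
    fix a assume aM: "(a, Suc N') \<in> M"
    have t: "fst (a, Suc N') = Suc N' \<or> snd (a, Suc N') = Suc N'" "fst (c, Suc N') = Suc N' \<or> snd (c, Suc N') = Suc N'" by simp_all
    from vd_uniq[OF v o NS aM ex t] show "a = c" by simp
  qed
qed




lemma crB:
  assumes v: "vd N' k S M" and a: "a \<in> S"
  shows "crossings (S - {a}, insert (a, Suc N') M) = crossings (S, M) + card {p\<in>S. a<p}"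
proof -
  let ?N = "Suc N'"
  let ?X = "{c\<in>M. fst c < a \<and> a < snd c}"
  let ?Y = "{p\<in>S. a<p}"
  have bM: "fst c < snd c" "snd c \<le> N'" if "c \<in> M" for c
  proof -
    obtain c1 c2 where "c = (c1,c2)" by (cases c)
    then show "fst c < snd c" "snd c \<le> N'" using vd_chord[OF v, of c1 c2] that by simp_all
  qed
  have bS: "p \<le> N'" if "p \<in> S" for p using vd_S[OF v that] by simp
  have nM: "(a, ?N) \<notin> M" by (rule vdB4[OF v])
  have finS: "finite S" and finM: "finite M" using vd_finite[OF v] by simp_all
  have E1: "FF (insert (a, ?N) M) = FF M \<union> (\<lambda>c. (c, (a, ?N))) ` ?X"
  proof
    show "FF (insert (a, ?N) M) \<subseteq> FF M \<union> (\<lambda>c. (c, (a, ?N))) ` ?X"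
    proof
      fix z assume z: "z \<in> FF (insert (a, ?N) M)"
      obtain c1 c2 where zc: "z = (c1, c2)" by (cases z)
      have c: "c1 \<in> insert (a, ?N) M" "c2 \<in> insert (a, ?N) M"
        "fst c1 < fst c2" "fst c2 < snd c1" "snd c1 < snd c2"
        using z zc unfolding FF_def by simp_all
      have c1M: "c1 \<in> M"
      proof (rule ccontr)
        assume "c1 \<notin> M"
        then have c1e: "c1 = (a, ?N)" using c(1) by blast
        show False
        proof (cases "c2 \<in> M")
          case True
          then have "snd c2 \<le> N'" by (rule bM)
          then show False using c(5) c1e by simp
        next
          case False
          then have "c2 = (a, ?N)" using c(2) by blast
          then show False using c(5) c1e by simp
        qed
      qed
      show "z \<in> FF M \<union> (\<lambda>c. (c, (a, ?N))) ` ?X"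
      proof (cases "c2 \<in> M")
        case True
        then have "z \<in> FF M" using c c1M zc unfolding FF_def by simp
        then show ?thesis by blast
      next
        case False
        then have c2e: "c2 = (a, ?N)" using c(2) by blast
        then have "c1 \<in> ?X" using c c1M by simp
        then show ?thesis using zc c2e by blast
      qed
    qed
  next
    show "FF M \<union> (\<lambda>c. (c, (a, ?N))) ` ?X \<subseteq> FF (insert (a, ?N) M)"
    proof
      fix z assume "z \<in> FF M \<union> (\<lambda>c. (c, (a, ?N))) ` ?X"
      then consider "z \<in> FF M" | c where "c \<in> ?X" "z = (c, (a, ?N))" by blast
      then show "z \<in> FF (insert (a, ?N) M)"
      proof cases
        case 1 then show ?thesis unfolding FF_def by blast
      next
        case 2
        have "snd c \<le> N'" using 2 bM by blast
        then show ?thesis using 2 unfolding FF_def by simp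
      qed
    qed
  qed
  have E2: "TC (S - {a}) (insert (a, ?N) M) = TC (S - {a}) M \<union> (\<lambda>p. (p, (a, ?N))) ` ?Y"
  proof
    show "TC (S - {a}) (insert (a, ?N) M) \<subseteq> TC (S - {a}) M \<union> (\<lambda>p. (p, (a, ?N))) ` ?Y"
    proof
      fix z assume z: "z \<in> TC (S - {a}) (insert (a, ?N) M)"
      obtain p ch where zc: "z = (p, ch)" by (cases z)
      have c: "p \<in> S - {a}" "ch \<in> insert (a, ?N) M" "fst ch < p" "p < snd ch"
        using z zc unfolding TC_def by simp_all
      show "z \<in> TC (S - {a}) M \<union> (\<lambda>p. (p, (a, ?N))) ` ?Y"
      proof (cases "ch \<in> M")
        case True
        then have "z \<in> TC (S - {a}) M" using c zc unfolding TC_def by simp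
        then show ?thesis by blast
      next
        case False
        then have che: "ch = (a, ?N)" using c(2) by blast
        then have "p \<in> ?Y" using c by simp
        then show ?thesis using zc che by blast
      qed
    qed
  next
    show "TC (S - {a}) M \<union> (\<lambda>p. (p, (a, ?N))) ` ?Y \<subseteq> TC (S - {a}) (insert (a, ?N) M)"
    proof
      fix z assume "z \<in> TC (S - {a}) M \<union> (\<lambda>p. (p, (a, ?N))) ` ?Y"
      then consider "z \<in> TC (S - {a}) M" | p where "p \<in> ?Y" "z = (p, (a, ?N))" by blast
      then show "z \<in> TC (S - {a}) (insert (a, ?N) M)"
      proof cases
        case 1 then show ?thesis unfolding TC_def by blast
      next
        case 2
        have "p \<le> N'" using 2 bS by blast
        then show ?thesis using 2 unfolding TC_def by simp
      qed
    qed
  qed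
  have E3: "TC S M = TC (S - {a}) M \<union> (\<lambda>c. (a, c)) ` ?X"
  proof
    show "TC S M \<subseteq> TC (S - {a}) M \<union> (\<lambda>c. (a, c)) ` ?X"
    proof
      fix z assume z: "z \<in> TC S M"
      obtain p ch where zc: "z = (p, ch)" by (cases z)
      have c: "p \<in> S" "ch \<in> M" "fst ch < p" "p < snd ch"
        using z zc unfolding TC_def by simp_all
      show "z \<in> TC (S - {a}) M \<union> (\<lambda>c. (a, c)) ` ?X"
      proof (cases "p = a")
        case False
        then have "z \<in> TC (S - {a}) M" using c zc unfolding TC_def by simp
        then show ?thesis by blast
      next
        case True
        then have "ch \<in> ?X" using c by simp
        then show ?thesis using zc True by blast
      qed
    qed
  next
    show "TC (S - {a}) M \<union> (\<lambda>c. (a, c)) ` ?X \<subseteq> TC S M"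
    proof
      fix z assume "z \<in> TC (S - {a}) M \<union> (\<lambda>c. (a, c)) ` ?X"
      then consider "z \<in> TC (S - {a}) M" | c where "c \<in> ?X" "z = (a, c)" by blast
      then show "z \<in> TC S M"
      proof cases
        case 1 then show ?thesis unfolding TC_def by blast
      next
        case 2 then show ?thesis using a unfolding TC_def by simp
      qed
    qed
  qed
  have D1: "FF M \<inter> (\<lambda>c. (c, (a, ?N))) ` ?X = {}"
    using nM unfolding FF_def by blast
  have D2: "TC (S - {a}) M \<inter> (\<lambda>p. (p, (a, ?N))) ` ?Y = {}"
    using nM unfolding TC_def by blast
  have D3: "TC (S - {a}) M \<inter> (\<lambda>c. (a, c)) ` ?X = {}"
    unfolding TC_def by blast
  have finX: "finite ?X" using finM by simp
  have finY: "finite ?Y" using finS by simp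
  have finS': "finite (S - {a})" using finS by simp
  have K1: "card ((\<lambda>c. (c, (a, ?N))) ` ?X) = card ?X" by (rule card_image) (simp add: inj_on_def)
  have K2: "card ((\<lambda>p. (p, (a, ?N))) ` ?Y) = card ?Y" by (rule card_image) (simp add: inj_on_def)
  have K3: "card ((\<lambda>c. (a, c)) ` ?X) = card ?X" by (rule card_image) (simp add: inj_on_def)
  have C1: "card (FF (insert (a, ?N) M)) = card (FF M) + card ?X"
    unfolding E1 using card_Un_disjoint[OF finite_FF[OF finM] finite_imageI[OF finX] D1] K1 by simp
  have C2: "card (TC (S - {a}) (insert (a, ?N) M)) = card (TC (S - {a}) M) + card ?Y"
    unfolding E2 using card_Un_disjoint[OF finite_TC[OF finS' finM] finite_imageI[OF finY] D2] K2 by simp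
  have C3: "card (TC S M) = card (TC (S - {a}) M) + card ?X"
    unfolding E3 using card_Un_disjoint[OF finite_TC[OF finS' finM] finite_imageI[OF finX] D3] K3 by simp
  show ?thesis unfolding cr_eq C1 C2 C3 by simp
qed




lemma cdB: "(S,M) \<in> chord_diagrams (Suc g) n \<longleftrightarrow> vd (Suc (Suc (2*g+n))) n S M"
  by (simp add: cd_iff)

lemma cdB': "(S,M) \<in> chord_diagrams g (Suc n) \<longleftrightarrow> vd (Suc (2*g+n)) (Suc n) S M"
  by (simp add: cd_iff)

definition pa :: "nat \<Rightarrow> (nat \<times> nat) set \<Rightarrow> nat" where
  "pa N M = (THE a. (a, N) \<in> M)"

lemma pa_ins: "vd N' k S M \<Longrightarrow> pa (Suc N') (insert (a, Suc N') M) = a"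
  unfolding pa_def
proof (rule the_equality)
  assume v: "vd N' k S M"
  show "(a, Suc N') \<in> insert (a, Suc N') M" by simp
  fix b assume "(b, Suc N') \<in> insert (a, Suc N') M"
  then show "b = a" using vdB4[OF v] by blast
qed

lemma pa_mem: "vd (Suc N') n S M \<Longrightarrow> Suc N' \<notin> S \<Longrightarrow> (pa (Suc N') M, Suc N') \<in> M"
  unfolding pa_def by (rule theI'[OF vdB3])

lemma LB: "(\<Sum>D\<in>{D\<in>chord_diagrams (Suc g) n. Suc (Suc (2*g+n)) \<notin> fst D}. x ^ crossings D)
    = (\<Sum>i<Suc n. x^i) * TX x g (Suc n)"
proof -
  let ?N' = "Suc (2*g+n)"
  let ?N = "Suc ?N'"
  let ?Sig = "Sigma (chord_diagrams g (Suc n)) fst"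
  let ?B = "{D\<in>chord_diagrams (Suc g) n. ?N \<notin> fst D}"
  let ?phi = "\<lambda>z. (fst (fst z) - {snd z}, insert (snd z, ?N) (snd (fst z)))"
  let ?psi = "\<lambda>D. ((insert (pa ?N (snd D)) (fst D), snd D - {(pa ?N (snd D), ?N)}), pa ?N (snd D))"
  have bij: "bij_betw ?phi ?Sig ?B"
  proof (rule bij_betw_byWitness[where f' = ?psi])
    show "\<forall>z\<in>?Sig. ?psi (?phi z) = z"
    proof
      fix z assume z: "z \<in> ?Sig"
      obtain S M a where zz: "z = ((S, M), a)" by (cases z) auto
      have v: "vd ?N' (Suc n) S M" and a: "a \<in> S" using z zz by (simp_all add: cdB')
      have p: "pa ?N (insert (a, ?N) M) = a" by (rule pa_ins[OF v])
      have "(a, ?N) \<notin> M" by (rule vdB4[OF v])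
      then have "insert (a, ?N) M - {(a, ?N)} = M" by simp
      moreover have "insert a (S - {a}) = S" using a by blast
      ultimately show "?psi (?phi z) = z" using zz p by simp
    qed
    show "\<forall>D\<in>?B. ?phi (?psi D) = D"
    proof
      fix D assume D: "D \<in> ?B"
      obtain S M where DD: "D = (S, M)" by (cases D)
      have v: "vd ?N n S M" and NS: "?N \<notin> S" using D DD by (simp_all add: cdB)
      have m: "(pa ?N M, ?N) \<in> M" by (rule pa_mem[OF v NS])
      have "pa ?N M \<notin> S" using vd_chord[OF v m] by simp
      then have "insert (pa ?N M) S - {pa ?N M} = S" by simp
      moreover have "insert (pa ?N M, ?N) (M - {(pa ?N M, ?N)}) = M" using m by blast
      ultimately show "?phi (?psi D) = D" using DD by simp
    qed
    show "?phi ` ?Sig \<subseteq> ?B"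
    proof
      fix E assume "E \<in> ?phi ` ?Sig"
      then obtain z where z: "z \<in> ?Sig" "E = ?phi z" by blast
      obtain S M a where zz: "z = ((S, M), a)" by (cases z) auto
      have v: "vd ?N' (Suc n) S M" and a: "a \<in> S" using z zz by (simp_all add: cdB')
      have "?N \<notin> S - {a}" using vd_S[OF v] by fastforce
      then show "E \<in> ?B" using vdB1[OF v a] z(2) zz by (simp add: cdB)
    qed
    show "?psi ` ?B \<subseteq> ?Sig"
    proof
      fix E assume "E \<in> ?psi ` ?B"
      then obtain D where D: "D \<in> ?B" "E = ?psi D" by blast
      obtain S M where DD: "D = (S, M)" by (cases D)
      have v: "vd ?N n S M" and NS: "?N \<notin> S" using D DD by (simp_all add: cdB)
      have m: "(pa ?N M, ?N) \<in> M" by (rule pa_mem[OF v NS])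
      show "E \<in> ?Sig" using vdB2[OF v NS m] D(2) DD by (simp add: cdB')
    qed
  qed
  let ?h = "\<lambda>D. x ^ crossings D"
  have "(\<Sum>D\<in>?B. ?h D) = (\<Sum>z\<in>?Sig. ?h (?phi z))"
    using sum.reindex_bij_betw[OF bij, of ?h] by simp
  also have "\<dots> = (\<Sum>(D', a)\<in>?Sig. ?h (?phi (D', a)))"
    by (rule sum.cong) auto
  also have "\<dots> = (\<Sum>D'\<in>chord_diagrams g (Suc n). \<Sum>a\<in>fst D'. ?h (?phi (D', a)))"
  proof (rule sum.Sigma[symmetric])
    show "finite (chord_diagrams g (Suc n))" by (rule finite_cd)
    show "\<forall>D'\<in>chord_diagrams g (Suc n). finite (fst D')"
    proof
      fix D' assume "D' \<in> chord_diagrams g (Suc n)"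
      then obtain S M where "D' = (S, M)" "vd ?N' (Suc n) S M" by (cases D') (simp add: cdB')
      then show "finite (fst D')" using vd_finite by simp
    qed
  qed
  also have "\<dots> = (\<Sum>D'\<in>chord_diagrams g (Suc n). x ^ crossings D' * (\<Sum>i<Suc n. x^i))"
  proof (rule sum.cong[OF refl])
    fix D' assume "D' \<in> chord_diagrams g (Suc n)"
    then obtain S M where DD: "D' = (S, M)" and v: "vd ?N' (Suc n) S M" by (cases D') (simp add: cdB')
    have "(\<Sum>a\<in>fst D'. ?h (?phi (D', a))) = (\<Sum>a\<in>S. x ^ crossings (S, M) * x ^ card {p\<in>S. a<p})"
      using DD crB[OF v] by (simp add: power_add)
    also have "\<dots> = x ^ crossings (S, M) * (\<Sum>a\<in>S. x ^ card {p\<in>S. a<p})"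
      by (simp add: sum_distrib_left)
    also have "(\<Sum>a\<in>S. x ^ card {p\<in>S. a<p}) = (\<Sum>i<card S. x ^ i)"
      using vd_finite[OF v] by (intro rank_sum) simp
    finally show "(\<Sum>a\<in>fst D'. ?h (?phi (D', a))) = x ^ crossings D' * (\<Sum>i<Suc n. x^i)"
      using DD vd_card[OF v] by simp
  qed
  also have "\<dots> = (\<Sum>D'\<in>chord_diagrams g (Suc n). (\<Sum>i<Suc n. x^i) * x ^ crossings D')"
    by (rule sum.cong[OF refl]) (rule mult.commute)
  also have "\<dots> = (\<Sum>i<Suc n. x^i) * TX x g (Suc n)"
    unfolding TX_def by (rule sum_distrib_left[symmetric])
  finally show ?thesis .
qed




lemma TX_split: "TX x f n = (\<Sum>D\<in>{D\<in>chord_diagrams f n. N \<in> fst D}. x ^ crossings D)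
   + (\<Sum>D\<in>{D\<in>chord_diagrams f n. N \<notin> fst D}. x ^ crossings D)"
proof -
  have e: "chord_diagrams f n = {D\<in>chord_diagrams f n. N \<in> fst D} \<union> {D\<in>chord_diagrams f n. N \<notin> fst D}"
    by blast
  show ?thesis unfolding TX_def
    by (subst e, rule sum.union_disjoint) (use finite_cd in auto)
qed

lemma TX00: "TX x 0 0 = 1"
proof -
  have "chord_diagrams 0 0 = {({}, {})}"
  proof
    show "chord_diagrams 0 0 \<subseteq> {({}, {})}"
    proof
      fix D assume "D \<in> chord_diagrams 0 0"
      then obtain S M where D: "D = (S, M)" "vd 0 0 S M" by (cases D) (simp add: cd_iff)
      have "S = {}" using vd_S_sub[OF D(2)] by auto
      moreover have "M = {}" using vd_M_sub[OF D(2)] by auto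
      ultimately show "D \<in> {({}, {})}" using D by simp
    qed
    show "{({}, {})} \<subseteq> chord_diagrams 0 0"
      by (simp add: cd_iff vd_def)
  qed
  moreover have "crossings ({}, {}) = 0" by (simp add: cr_eq FF_def TC_def)
  ultimately show ?thesis by (simp add: TX_def)
qed

lemma TXrec0: "TX x (Suc g) 0 = TX x g 1"
proof -
  have eqN: "Suc (Suc (2*g+0)) = 2 * Suc g" by simp
  have "TX x (Suc g) 0 = (\<Sum>D\<in>{D\<in>chord_diagrams (Suc g) 0. 2 * Suc g \<in> fst D}. x ^ crossings D)
   + (\<Sum>D\<in>{D\<in>chord_diagrams (Suc g) 0. 2 * Suc g \<notin> fst D}. x ^ crossings D)"
    by (rule TX_split)
  also have "\<dots> = (\<Sum>i<Suc 0. x^i) * TX x g (Suc 0)"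
    unfolding LA0[of "Suc g"] LB[where g=g and n=0 and x=x, unfolded eqN] by simp
  finally show ?thesis by simp
qed

lemma TXrecS: "TX x f (Suc n) = TX x f n + (case f of 0 \<Rightarrow> 0 | Suc g \<Rightarrow> (\<Sum>i<Suc (Suc n). x^i) * TX x g (Suc (Suc n)))"
proof -
  have "TX x f (Suc n) = (\<Sum>D\<in>{D\<in>chord_diagrams f (Suc n). Suc (2*f+n) \<in> fst D}. x ^ crossings D)
   + (\<Sum>D\<in>{D\<in>chord_diagrams f (Suc n). Suc (2*f+n) \<notin> fst D}. x ^ crossings D)"
    by (rule TX_split)
  also have "(\<Sum>D\<in>{D\<in>chord_diagrams f (Suc n). Suc (2*f+n) \<in> fst D}. x ^ crossings D) = TX x f n"
    by (rule LA)
  also have "(\<Sum>D\<in>{D\<in>chord_diagrams f (Suc n). Suc (2*f+n) \<notin> fst D}. x ^ crossings D)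
      = (case f of 0 \<Rightarrow> 0 | Suc g \<Rightarrow> (\<Sum>i<Suc (Suc n). x^i) * TX x g (Suc (Suc n)))"
  proof (cases f)
    case 0
    have e: "Suc (2*f+n) = Suc n" using 0 by simp
    show ?thesis unfolding e unfolding 0 LB0 by simp
  next
    case (Suc g)
    have eqN: "Suc (Suc (2*g+Suc n)) = Suc (2*f+n)" using Suc by simp
    show ?thesis using LB[where g=g and n="Suc n" and x=x, unfolded eqN] Suc by simp
  qed
  finally show ?thesis .
qed


definition Fm :: "nat \<Rightarrow> nat \<Rightarrow> qfield" where
  "Fm m n = (if (\<exists>f. m = n + 2*f) then (let f = (m-n) div 2 in qfact n * TX (qq^2) f n / DD^f) else 0)"

lemma Fm_eq: "m = n + 2*f \<Longrightarrow> Fm m n = qfact n * TX (qq^2) f n / DD^f"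
  unfolding Fm_def by auto

lemma Fm_0: "\<not>(\<exists>f. m = n + 2*f) \<Longrightarrow> Fm m n = 0"
  unfolding Fm_def by auto

lemma cc_alt: "cc n = qq ^ n / DD" by (simp add: cc_def)

lemma field_aux2: fixes a b c d y e t1 t2 :: "'a::field"
  assumes "a * b = c" "d \<noteq> 0"
  shows "a * (b * t1 / d^(Suc g)) + y / d * (c * e * t2 / d^g) = c * (t1 + y * e * t2) / d^(Suc g)"
proof -
  have X: "a * (b * t1 / d^(Suc g)) = c * t1 / d^(Suc g)" using assms(1) by (simp add: mult.assoc[symmetric])
  have Y: "y / d * (c * e * t2 / d^g) = c * (y * e * t2) / d^(Suc g)" using assms(2) by (simp add: field_simps)
  show ?thesis by (simp only: X Y distrib_left add_divide_distrib)
qed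

lemma wrec_Fm: "wrec m n = Fm m n"
proof (induction m arbitrary: n)
  case 0 show ?case
  proof (cases "n = 0")
    case True then show ?thesis by (simp add: Fm_eq[of 0 0 0] qfact_def TX00)
  next
    case False then show ?thesis by (simp add: Fm_0)
  qed
next
  case (Suc m)
  show ?case
  proof (cases "\<exists>f. Suc m = n + 2*f")
    case True
    then obtain f where f: "Suc m = n + 2*f" by blast
    show ?thesis
    proof (cases n)
      case 0
      then obtain g where g: "f = Suc g" using f by (cases f) auto
      have m: "m = 1 + 2*g" using f g 0 by simp
      have "wrec (Suc m) n = cc 0 * Fm m 1" using 0 Suc by simp
      also have "\<dots> = (1/DD) * (qfact 1 * TX (qq^2) g 1 / DD^g)" using m by (simp add: Fm_eq cc_alt)
      also have "\<dots> = qfact 0 * TX (qq^2) (Suc g) 0 / DD^(Suc g)"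
        by (simp add: TXrec0 qfact_def qint_Suc0)
      also have "\<dots> = Fm (Suc m) n" using Fm_eq[OF f] g 0 by simp
      finally show ?thesis .
    next
      case (Suc j)
      have A: "Fm m j = qfact j * TX (qq^2) f j / DD^f" using f Suc by (simp add: Fm_eq)
      have qn: "qint n * qfact j = qfact n" using Suc by (simp add: qfact_Suc mult.commute)
      have w: "wrec (Suc m) n = qint n * Fm m j + cc n * Fm m (Suc n)" using Suc \<open>\<And>n. wrec m n = Fm m n\<close> by simp
      show ?thesis
      proof (cases f)
        case 0
        have B: "Fm m (Suc n) = 0" using f 0 by (intro Fm_0) auto
        have "wrec (Suc m) n = qfact n * TX (qq^2) 0 j" using w A B 0 qn by simp
        also have "\<dots> = Fm (Suc m) n"
        proof -
          have T: "TX (qq^2) 0 n = TX (qq^2) 0 j" using TXrecS[of "qq^2" 0 j] \<open>n = Suc j\<close> by (simp only: nat.case add_0_right)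
          show ?thesis using Fm_eq[OF f] \<open>f = 0\<close> T by simp
        qed
        finally show ?thesis .
      next
        case (Suc g)
        have B: "Fm m (Suc n) = qfact (Suc n) * TX (qq^2) g (Suc n) / DD^g"
          using f Suc \<open>n = Suc j\<close> by (intro Fm_eq) simp
        have S: "(\<Sum>i<Suc n. (qq^2)^i) = qq ^ n * qint (Suc n)" by (simp add: qint_geom)
        have "wrec (Suc m) n = qint n * (qfact j * TX (qq^2) f j / DD^f)
             + qq ^ n / DD * (qfact n * qint (Suc n) * TX (qq^2) g (Suc n) / DD^g)"
          using w A B by (simp add: qfact_Suc cc_alt)
        also have "\<dots> = qfact n * (TX (qq^2) f j + (qq ^ n * qint (Suc n)) * TX (qq^2) g (Suc n)) / DD^f"
          unfolding \<open>f = Suc g\<close> by (rule field_aux2[OF qn DD_nz])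
        also have "\<dots> = qfact n * TX (qq^2) f n / DD^f"
        proof -
          have T0: "TX (qq^2) f n = TX (qq^2) f j + (\<Sum>i<Suc n. (qq^2)^i) * TX (qq^2) g (Suc n)"
            using TXrecS[of "qq^2" f j] unfolding \<open>n = Suc j\<close> \<open>f = Suc g\<close> nat.case .
          have T: "TX (qq^2) f n = TX (qq^2) f j + (qq ^ n * qint (Suc n)) * TX (qq^2) g (Suc n)"
            using T0 unfolding S .
          show ?thesis by (simp only: T)
        qed
        also have "\<dots> = Fm (Suc m) n" by (simp add: Fm_eq[OF f])
        finally show ?thesis .
      qed
    qed
  next
    case False
    have B: "Fm m (Suc n) = 0"
    proof (rule Fm_0)
      show "\<not>(\<exists>f. m = Suc n + 2*f)"
      proof
        assume "\<exists>f. m = Suc n + 2*f"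
        then obtain f' where "m = Suc n + 2*f'" by blast
        then have "Suc m = n + 2*Suc f'" by simp
        with False show False by blast
      qed
    qed
    have "wrec (Suc m) n = (case n of 0 \<Rightarrow> 0 | Suc j \<Rightarrow> qint n * Fm m j)" using B Suc by (simp split: nat.split)
    also have "\<dots> = 0"
    proof (cases n)
      case (Suc j)
      have "Fm m j = 0"
      proof (rule Fm_0)
        show "\<not>(\<exists>f. m = j + 2*f)"
        proof
          assume "\<exists>f. m = j + 2*f"
          then obtain f' where "m = j + 2*f'" by blast
          then have "Suc m = n + 2*f'" using Suc by simp
          with False show False by blast
        qed
      qed
      then show ?thesis using Suc by simp
    qed simp
    finally show ?thesis using False by (simp add: Fm_0)
  qed
qed




lemma map_poly_of_nat_add: "map_poly (of_nat :: nat \<Rightarrow> 'a::comm_semiring_1) (p + q) = map_poly of_nat p + map_poly of_nat q"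
  by (rule poly_eqI) (simp add: coeff_map_poly)

lemma map_poly_of_nat_sum: "map_poly (of_nat :: nat \<Rightarrow> 'a::comm_semiring_1) (sum g A) = (\<Sum>a\<in>A. map_poly of_nat (g a))"
proof (cases "finite A")
  case True then show ?thesis
    by (induction A rule: finite_induct) (simp_all add: map_poly_of_nat_add)
qed simp

lemma poly_Tpoly: "poly (map_poly of_nat (Tpoly f n)) (x::'a::comm_semiring_1) = TX x f n"
  unfolding Tpoly_def TX_def map_poly_of_nat_sum
  by (simp add: poly_sum map_poly_monom poly_monom)

theorem theorem2p5:
  fixes m n :: nat
  assumes "n \<le> m" and "n mod 2 = m mod 2"
  shows "wcoeff m n =
    (if (\<exists>f. m = n + 2 * f)
     then (let f = (m - n) div 2 in
           qfact n * poly (map_poly of_nat (Tpoly f n)) (qq ^ 2) / (1 - qq powi (-2)) ^ f)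
     else 0)"
  unfolding wcoeff_wrec wrec_Fm Fm_def poly_Tpoly DD_def ..


end
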